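(* Let $M$ be a realizable point-line configuration of rank $3$ on $[d]$, and let $l$ be a line of $M$ containing exactly three points. Let $N$ be the matroid on $[d]$ whose dependent sets are exactly the subsets $S\subseteq[d]$ such that $|S|\ge4$, or $S\supseteq l$, or $S$ contains two distinct elements of $[d]\setminus l$ (so $N$ has rank $3$, no loops, $\mathcal{C}_2(N)=\{\{i,j\}: i\ne j\in[d]\setminus l\}$ and $\mathcal{C}_3(N)=\{l\}$). Then $V_N\subseteq V_M$.
   Context: A point-line configuration on $[d]$ is a simple matroid of rank at most $3$; its lines are the maximal subsets of size $\ge3$ and rank $2$. $\mathcal{C}_i(N)$ denotes the set of circuits of size $i$ of a matroid $N$. For a matroid $N$ on $[d]$ of rank at most $3$, a realization is a tuple $\gamma=(\gamma_1,\dots,\gamma_d)\in(\mathbb{C}^3)^d\cong\mathbb{C}^{3d}$ such that for all $S\subseteq[d]$, $(\gamma_s)_{s\in S}$ is linearly dependent iff $S$ is dependent in $N$; $\Gamma_N$ is the set of realizations, $N$ is realizable if $\Gamma_N\ne\emptyset$, and $V_N$ is the Zariski closure of $\Gamma_N$ in $\mathbb{C}^{3d}$. *)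

theory Defs
  imports "HOL-Analysis.Analysis"
begin

definition matroid_on :: "nat \<Rightarrow> nat set set \<Rightarrow> bool" where
  "matroid_on d I \<longleftrightarrow>
     (\<forall>X\<in>I. X \<subseteq> {1..d}) \<and> {} \<in> I \<and>
     (\<forall>X Y. Y \<in> I \<longrightarrow> X \<subseteq> Y \<longrightarrow> X \<in> I) \<and>
     (\<forall>X Y. X \<in> I \<longrightarrow> Y \<in> I \<longrightarrow> card X < card Y \<longrightarrow> (\<exists>e\<in>Y - X. insert e X \<in> I))"

definition mrank :: "nat set set \<Rightarrow> nat set \<Rightarrow> nat" where
  "mrank I X = Max (card ` {J. J \<subseteq> X \<and> J \<in> I})"

definition simple_matroid :: "nat \<Rightarrow> nat set set \<Rightarrow> bool" where
  "simple_matroid d I \<longleftrightarrow> matroid_on d I \<and> (\<forall>X. X \<subseteq> {1..d} \<longrightarrow> card X \<le> 2 \<longrightarrow> X \<in> I)"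

definition point_line_config :: "nat \<Rightarrow> nat set set \<Rightarrow> bool" where
  "point_line_config d I \<longleftrightarrow> simple_matroid d I \<and> mrank I {1..d} \<le> 3"

definition is_line :: "nat \<Rightarrow> nat set set \<Rightarrow> nat set \<Rightarrow> bool" where
  "is_line d I L \<longleftrightarrow> L \<subseteq> {1..d} \<and> card L \<ge> 3 \<and> mrank I L = 2 \<and>
     (\<forall>L'. L \<subseteq> L' \<longrightarrow> L' \<subseteq> {1..d} \<longrightarrow> card L' \<ge> 3 \<longrightarrow> mrank I L' = 2 \<longrightarrow> L' = L)"

text \<open>Linear dependence of the family (\<gamma> s) indexed by s in S (repetitions count).\<close>
definition fam_dependent :: "(nat \<Rightarrow> complex^3) \<Rightarrow> nat set \<Rightarrow> bool" where
  "fam_dependent \<gamma> S \<longleftrightarrow> (\<exists>c. (\<Sum>s\<in>S. c s *s \<gamma> s) = 0 \<and> (\<exists>s\<in>S. c s \<noteq> 0))"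

text \<open>Points of C^{3d} are encoded as maps \<gamma> :: nat \<Rightarrow> complex^3 that vanish outside [d].\<close>
definition tuple_space :: "nat \<Rightarrow> (nat \<Rightarrow> complex^3) set" where
  "tuple_space d = {\<gamma>. \<forall>i. i \<notin> {1..d} \<longrightarrow> \<gamma> i = 0}"

definition realizations :: "nat \<Rightarrow> nat set set \<Rightarrow> (nat \<Rightarrow> complex^3) set" where
  "realizations d I = {\<gamma> \<in> tuple_space d. \<forall>S. S \<subseteq> {1..d} \<longrightarrow> (fam_dependent \<gamma> S \<longleftrightarrow> S \<notin> I)}"

definition realizable :: "nat \<Rightarrow> nat set set \<Rightarrow> bool" where
  "realizable d I \<longleftrightarrow> realizations d I \<noteq> {}"

inductive_set polyfun :: "nat \<Rightarrow> ((nat \<Rightarrow> complex^3) \<Rightarrow> complex) set" for d where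
  pf_const: "(\<lambda>_. c) \<in> polyfun d"
| pf_coord: "i \<in> {1..d} \<Longrightarrow> (\<lambda>\<gamma>. \<gamma> i $ j) \<in> polyfun d"
| pf_add: "f \<in> polyfun d \<Longrightarrow> g \<in> polyfun d \<Longrightarrow> (\<lambda>\<gamma>. f \<gamma> + g \<gamma>) \<in> polyfun d"
| pf_mult: "f \<in> polyfun d \<Longrightarrow> g \<in> polyfun d \<Longrightarrow> (\<lambda>\<gamma>. f \<gamma> * g \<gamma>) \<in> polyfun d"

definition zariski_closure :: "nat \<Rightarrow> (nat \<Rightarrow> complex^3) set \<Rightarrow> (nat \<Rightarrow> complex^3) set" where
  "zariski_closure d A = {\<gamma> \<in> tuple_space d. \<forall>f\<in>polyfun d. (\<forall>x\<in>A. f x = 0) \<longrightarrow> f \<gamma> = 0}"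

definition realization_space :: "nat \<Rightarrow> nat set set \<Rightarrow> (nat \<Rightarrow> complex^3) set" where
  "realization_space d I = zariski_closure d (realizations d I)"

definition N_indep :: "nat \<Rightarrow> nat set \<Rightarrow> nat set set" where
  "N_indep d l = {S. S \<subseteq> {1..d} \<and>
      \<not> (card S \<ge> 4 \<or> l \<subseteq> S \<or> (\<exists>i j. i \<noteq> j \<and> i \<in> S - l \<and> j \<in> S - l))}"

end

theory Submission
  imports Defs
begin

lemma span3:
  fixes u1 u2 u3 :: "complex^3"
  assumes ind: "\<And>a b c. a *s u1 + b *s u2 + c *s u3 = 0 \<Longrightarrow> a = 0 \<and> b = 0 \<and> c = 0"
  shows "\<exists>a b c. v = a *s u1 + b *s u2 + c *s u3"
proof -
  have d12: "u1 \<noteq> u2" using ind[of 1 "-1" 0] by auto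
  have d13: "u1 \<noteq> u3" using ind[of 1 0 "-1"] by auto
  have d23: "u2 \<noteq> u3" using ind[of 0 1 "-1"] by auto
  let ?B = "{u1,u2,u3}"
  have cB: "card ?B = 3" using d12 d13 d23 by simp
  have iB: "\<not> vec.dependent ?B"
  proof
    assume "vec.dependent ?B"
    then obtain u where u: "\<exists>v\<in>?B. u v \<noteq> 0" "(\<Sum>v\<in>?B. u v *s v) = 0"
      using vec.dependent_finite[of ?B] by auto
    then have "u u1 *s u1 + u u2 *s u2 + u u3 *s u3 = 0"
      using d12 d13 d23 by (simp add: add.assoc)
    from ind[OF this] u(1) show False by auto
  qed
  have "vec.dim (UNIV :: (complex^3) set) = 3"
    by (simp add: card_cart_basis)
  then have "UNIV \<subseteq> vec.span ?B"
    using vec.card_eq_dim[of ?B UNIV] cB iB by simp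
  then have "v \<in> vec.span ?B" by auto
  then obtain a where "v - a *s u1 \<in> vec.span {u2,u3}" using vec.span_breakdown_eq by blast
  then obtain b where "v - a *s u1 - b *s u2 \<in> vec.span {u3}" using vec.span_breakdown_eq by blast
  then obtain c where "v - a *s u1 - b *s u2 - c *s u3 \<in> vec.span {}" using vec.span_breakdown_eq by blast
  then have "v - a *s u1 - b *s u2 - c *s u3 = 0" by simp
  then have "v = a *s u1 + b *s u2 + c *s u3" by (simp add: algebra_simps)
  then show ?thesis by blast
qed

lemma lin3:
  fixes v1 v2 v3 :: "complex^3"
  shows "(\<Sum>s\<in>S. c s *s (x s *s v1 + y s *s v2 + z s *s v3)) =
     (\<Sum>s\<in>S. c s * x s) *s v1 + (\<Sum>s\<in>S. c s * y s) *s v2 + (\<Sum>s\<in>S. c s * z s) *s v3"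
  by (simp add: vec_eq_iff sum_component sum.distrib sum_distrib_right mult.assoc)

lemma dep_repr:
  fixes v1 v2 v3 :: "complex^3"
  assumes ind: "\<And>a b c. a *s v1 + b *s v2 + c *s v3 = 0 \<Longrightarrow> a = 0 \<and> b = 0 \<and> c = 0"
    and fin: "finite S"
    and th: "\<And>i. i \<in> S \<Longrightarrow> \<theta> i = m i *s (x i *s v1 + y i *s v2 + z i *s v3)"
    and m: "\<And>i. i \<in> S \<Longrightarrow> m i \<noteq> 0"
  shows "fam_dependent \<theta> S \<longleftrightarrow> (\<exists>c. (\<Sum>s\<in>S. c s * x s) = 0 \<and> (\<Sum>s\<in>S. c s * y s) = 0
            \<and> (\<Sum>s\<in>S. c s * z s) = 0 \<and> (\<exists>s\<in>S. c s \<noteq> 0))"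
proof
  assume "fam_dependent \<theta> S"
  then obtain c s0 where c: "(\<Sum>s\<in>S. c s *s \<theta> s) = 0" "s0 \<in> S" "c s0 \<noteq> 0"
    unfolding fam_dependent_def by blast
  have "(\<Sum>s\<in>S. c s *s \<theta> s) = (\<Sum>s\<in>S. (c s * m s) *s (x s *s v1 + y s *s v2 + z s *s v3))"
    by (rule sum.cong) (simp_all add: th mult.assoc)
  then have "(\<Sum>s\<in>S. (c s * m s) * x s) *s v1 + (\<Sum>s\<in>S. (c s * m s) * y s) *s v2 + (\<Sum>s\<in>S. (c s * m s) * z s) *s v3 = 0"
    using c(1) lin3[of "\<lambda>s. c s * m s" x v1 y v2 z v3 S] by simp
  from ind[OF this] show "\<exists>c. (\<Sum>s\<in>S. c s * x s) = 0 \<and> (\<Sum>s\<in>S. c s * y s) = 0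
            \<and> (\<Sum>s\<in>S. c s * z s) = 0 \<and> (\<exists>s\<in>S. c s \<noteq> 0)"
    using c m[of s0] by (intro exI[of _ "\<lambda>s. c s * m s"]) auto
next
  assume "\<exists>c. (\<Sum>s\<in>S. c s * x s) = 0 \<and> (\<Sum>s\<in>S. c s * y s) = 0
            \<and> (\<Sum>s\<in>S. c s * z s) = 0 \<and> (\<exists>s\<in>S. c s \<noteq> 0)"
  then obtain c s0 where c: "(\<Sum>s\<in>S. c s * x s) = 0" "(\<Sum>s\<in>S. c s * y s) = 0"
            "(\<Sum>s\<in>S. c s * z s) = 0" "s0 \<in> S" "c s0 \<noteq> 0" by blast
  have "(\<Sum>s\<in>S. (c s / m s) *s \<theta> s) = (\<Sum>s\<in>S. c s *s (x s *s v1 + y s *s v2 + z s *s v3))"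
    by (rule sum.cong) (simp_all add: th m)
  also have "\<dots> = 0" using lin3[of c x v1 y v2 z v3 S] c by simp
  finally show "fam_dependent \<theta> S" unfolding fam_dependent_def
    using c m[of s0] by (intro exI[of _ "\<lambda>s. c s / m s"]) auto
qed

lemma fam1: "fam_dependent \<gamma> {i} \<longleftrightarrow> \<gamma> i = 0"
  unfolding fam_dependent_def
  by (auto intro: exI[of _ "\<lambda>_. 1"])

lemma fam2: assumes "i \<noteq> j"
  shows "fam_dependent \<gamma> {i,j} \<longleftrightarrow> (\<exists>p q. (p \<noteq> 0 \<or> q \<noteq> 0) \<and> p *s \<gamma> i + q *s \<gamma> j = 0)"
  unfolding fam_dependent_def using assms
  apply auto
  apply (rule_tac x="\<lambda>s. if s = i then p else q" in exI, simp)
  apply (rule_tac x="\<lambda>s. if s = i then p else q" in exI, simp)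
  done

lemma fam3: assumes "i \<noteq> j" "i \<noteq> k" "j \<noteq> k"
  shows "fam_dependent \<gamma> {i,j,k} \<longleftrightarrow> (\<exists>p q r. (p \<noteq> 0 \<or> q \<noteq> 0 \<or> r \<noteq> 0) \<and> p *s \<gamma> i + q *s \<gamma> j + r *s \<gamma> k = 0)"
  unfolding fam_dependent_def using assms
  apply (auto simp: add.assoc)
  apply (rule_tac x="\<lambda>s. if s = i then p else if s = j then q else r" in exI, simp add: add.assoc)
  apply (rule_tac x="\<lambda>s. if s = i then p else if s = j then q else r" in exI, simp add: add.assoc)
  apply (rule_tac x="\<lambda>s. if s = i then p else if s = j then q else r" in exI, simp add: add.assoc)
  done


lemma mrank_ge: "finite X \<Longrightarrow> J \<subseteq> X \<Longrightarrow> J \<in> I \<Longrightarrow> card J \<le> mrank I X"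
  unfolding mrank_def
  by (rule Max_ge) (auto intro: finite_subset[of _ "card ` Pow X"])

lemma mrank_wit: assumes "finite X" "{} \<in> I" shows "\<exists>J. J \<subseteq> X \<and> J \<in> I \<and> card J = mrank I X"
proof -
  have "finite (card ` {J. J \<subseteq> X \<and> J \<in> I})"
    using assms by (auto intro: finite_subset[of _ "card ` Pow X"])
  moreover have "{J. J \<subseteq> X \<and> J \<in> I} \<noteq> {}" using assms by auto
  ultimately have "mrank I X \<in> card ` {J. J \<subseteq> X \<and> J \<in> I}"
    unfolding mrank_def by (intro Max_in) auto
  then show ?thesis by auto
qed

lemma comb:
  assumes plc: "point_line_config d I" and r3: "mrank I {1..d} = 3"
    and line: "is_line d I l" and c3: "card l = 3"
  shows "\<exists>a b c j0. l = {a,b,c} \<and> a\<noteq>b \<and> a\<noteq>c \<and> b\<noteq>c \<and> l \<subseteq> {1..d} \<and> j0 \<in> {1..d} - l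
    \<and> l \<notin> I \<and> {a,b} \<in> I \<and> {a,c} \<in> I \<and> {b,c} \<in> I \<and> (\<forall>j\<in>{1..d}-l. {a,b,j} \<in> I)"
proof -
  have mat: "matroid_on d I" and simp2: "\<And>X. X \<subseteq> {1..d} \<Longrightarrow> card X \<le> 2 \<Longrightarrow> X \<in> I"
    using plc unfolding point_line_config_def simple_matroid_def by auto
  have emp: "{} \<in> I" and her: "\<And>X Y. Y \<in> I \<Longrightarrow> X \<subseteq> Y \<Longrightarrow> X \<in> I"
    and aug: "\<And>X Y. X \<in> I \<Longrightarrow> Y \<in> I \<Longrightarrow> card X < card Y \<Longrightarrow> (\<exists>e\<in>Y - X. insert e X \<in> I)"
    using mat unfolding matroid_on_def by blast+
  have lsub: "l \<subseteq> {1..d}" and lr: "mrank I l = 2"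
    and lmax: "\<And>L'. l \<subseteq> L' \<Longrightarrow> L' \<subseteq> {1..d} \<Longrightarrow> card L' \<ge> 3 \<Longrightarrow> mrank I L' = 2 \<Longrightarrow> L' = l"
    using line unfolding is_line_def by auto
  obtain a b c where abc: "l = {a,b,c}" "a\<noteq>b" "b\<noteq>c" "a\<noteq>c" using c3 card_3_iff by metis
  have fl: "finite l" using abc by simp
  have lI: "l \<notin> I"
  proof
    assume "l \<in> I"
    then have "card l \<le> mrank I l" using mrank_ge[OF fl] by simp
    then show False using lr c3 by simp
  qed
  obtain J where J: "J \<subseteq> {1..d}" "J \<in> I" "card J = 3" using mrank_wit[of "{1..d}" I] emp r3 by auto
  have "\<not> J \<subseteq> l"
  proof
    assume "J \<subseteq> l"
    then have "J = l" using J(3) c3 fl by (simp add: card_subset_eq)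
    then show False using J lI by simp
  qed
  then obtain j0 where j0: "j0 \<in> {1..d} - l" using J by blast
  have ab: "{a,b} \<in> I" "{a,c} \<in> I" "{b,c} \<in> I"
    using abc lsub by (auto intro!: simp2 simp: card_insert_if)
  have abj: "{a,b,j} \<in> I" if j: "j \<in> {1..d} - l" for j
  proof (rule ccontr)
    assume nj: "{a,b,j} \<notin> I"
    let ?L = "insert j l"
    have fL: "finite ?L" using fl by simp
    have le: "card K \<le> 2" if K: "K \<subseteq> ?L" "K \<in> I" for K
    proof (rule ccontr)
      assume "\<not> card K \<le> 2"
      then have "card {a,b} < card K" using abc by simp
      then obtain e where e: "e \<in> K - {a,b}" "insert e {a,b} \<in> I" using aug[OF ab(1) K(2)] by blast
      then have "e = c \<or> e = j" using K abc by auto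
      then show False using e lI nj abc by (auto simp: insert_commute)
    qed
    obtain K where K: "K \<subseteq> ?L" "K \<in> I" "card K = mrank I ?L" using mrank_wit[OF fL emp] by blast
    have "2 \<le> mrank I ?L" using mrank_ge[OF fL, of "{a,b}" I] ab abc by simp
    then have "mrank I ?L = 2" using le[OF K(1,2)] K(3) by simp
    moreover have "card ?L \<ge> 3" using c3 fl j by simp
    ultimately have "?L = l" using lmax[of ?L] lsub j by auto
    then show False using j by auto
  qed
  show ?thesis using abc lsub j0 lI ab abj by blast
qed


lemma combeq: fixes u1 u2 u3 :: "complex^3" shows
  "p *s u1 + q *s u2 + r *s (x *s u1 + y *s u2 + z *s u3) = (p + r*x) *s u1 + (q + r*y) *s u2 + (r*z) *s u3"
  by (simp add: vec_eq_iff algebra_simps)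

lemma coords:
  fixes \<theta> :: "nat \<Rightarrow> complex^3"
  assumes dist: "a\<noteq>b" "a\<noteq>c" "b\<noteq>c" "a\<noteq>j0" "b\<noteq>j0" "c\<noteq>j0"
    and i3: "\<not> fam_dependent \<theta> {a,b,j0}"
    and dl: "fam_dependent \<theta> {a,b,c}"
    and nbc: "\<not> fam_dependent \<theta> {b,c}" and nac: "\<not> fam_dependent \<theta> {a,c}"
  shows "\<exists>x y z. (\<forall>i. \<theta> i = x i *s \<theta> a + y i *s \<theta> b + z i *s \<theta> j0) \<and> x a = 1 \<and> y a = 0 \<and> z a = 0
     \<and> x b = 0 \<and> y b = 1 \<and> z b = 0 \<and> x j0 = 0 \<and> y j0 = 0 \<and> z j0 = 1 \<and> z c = 0 \<and> x c \<noteq> 0 \<and> y c \<noteq> 0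
     \<and> (\<forall>p q r. p *s \<theta> a + q *s \<theta> b + r *s \<theta> j0 = 0 \<longrightarrow> p=0 \<and> q=0 \<and> r=0)"
proof -
  let ?u1 = "\<theta> a" and ?u2 = "\<theta> b" and ?u3 = "\<theta> j0"
  have ind: "\<And>p q r. p *s ?u1 + q *s ?u2 + r *s ?u3 = 0 \<Longrightarrow> p=0 \<and> q=0 \<and> r=0"
    using i3 unfolding fam3[OF dist(1) dist(4) dist(5)] by auto
  have "\<forall>i. \<exists>t. \<theta> i = fst t *s ?u1 + fst (snd t) *s ?u2 + snd (snd t) *s ?u3"
  proof
    fix i
    obtain p q r where "\<theta> i = p *s ?u1 + q *s ?u2 + r *s ?u3" using span3[OF ind] by blast
    then show "\<exists>t. \<theta> i = fst t *s ?u1 + fst (snd t) *s ?u2 + snd (snd t) *s ?u3"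
      by (intro exI[of _ "(p,q,r)"]) simp
  qed
  then obtain T where T: "\<And>i. \<theta> i = fst (T i) *s ?u1 + fst (snd (T i)) *s ?u2 + snd (snd (T i)) *s ?u3"
    by (metis (no_types))
  define x where "x i = (if i = a then 1 else if i = b \<or> i = j0 then 0 else fst (T i))" for i
  define y where "y i = (if i = b then 1 else if i = a \<or> i = j0 then 0 else fst (snd (T i)))" for i
  define z where "z i = (if i = j0 then 1 else if i = a \<or> i = b then 0 else snd (snd (T i)))" for i
  have rep: "\<forall>i. \<theta> i = x i *s ?u1 + y i *s ?u2 + z i *s ?u3"
  proof
    fix i
    show "\<theta> i = x i *s ?u1 + y i *s ?u2 + z i *s ?u3"
    proof (cases "i = a \<or> i = b \<or> i = j0")
      case True then show ?thesis using dist unfolding x_def y_def z_def by (auto simp del: vector_smult_lzero)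
    next
      case False then show ?thesis unfolding x_def y_def z_def by (simp only: if_False T[of i]) auto
    qed
  qed
  obtain p q r where pqr: "p \<noteq> 0 \<or> q \<noteq> 0 \<or> r \<noteq> 0" "p *s ?u1 + q *s ?u2 + r *s \<theta> c = 0"
    using dl unfolding fam3[OF dist(1) dist(2) dist(3)] by blast
  have "(p + r * x c) *s ?u1 + (q + r * y c) *s ?u2 + (r * z c) *s ?u3 = 0"
  proof -
    have hc: "\<theta> c = x c *s ?u1 + y c *s ?u2 + z c *s ?u3" using rep by blast
    show ?thesis using pqr(2) combeq[of p ?u1 q ?u2 r "x c" "y c" "z c" ?u3] unfolding hc[symmetric] by simp
  qed
  from ind[OF this] pqr(1) have zc: "z c = 0" by auto
  have xc: "x c \<noteq> 0"
  proof
    assume "x c = 0"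
    moreover have "\<theta> c = x c *s ?u1 + y c *s ?u2 + z c *s ?u3" using rep by blast
    ultimately have "y c *s ?u2 + (-1) *s \<theta> c = 0" using zc by (simp add: vec_eq_iff)
    then have "fam_dependent \<theta> {b,c}" unfolding fam2[OF dist(3)]
      by (intro exI[of _ "y c"] exI[of _ "-1"]) simp
    then show False using nbc by blast
  qed
  have yc: "y c \<noteq> 0"
  proof
    assume "y c = 0"
    moreover have "\<theta> c = x c *s ?u1 + y c *s ?u2 + z c *s ?u3" using rep by blast
    ultimately have "x c *s ?u1 + (-1) *s \<theta> c = 0" using zc by (simp add: vec_eq_iff)
    then have "fam_dependent \<theta> {a,c}" unfolding fam2[OF dist(2)]
      by (intro exI[of _ "x c"] exI[of _ "-1"]) simp
    then show False using nac by blast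
  qed
  have v: "x a = 1 \<and> y a = 0 \<and> z a = 0
     \<and> x b = 0 \<and> y b = 1 \<and> z b = 0 \<and> x j0 = 0 \<and> y j0 = 0 \<and> z j0 = 1"
    using dist unfolding x_def y_def z_def by auto
  have ind': "\<forall>p q r. p *s ?u1 + q *s ?u2 + r *s ?u3 = 0 \<longrightarrow> p=0 \<and> q=0 \<and> r=0" using ind by blast
  show ?thesis
    apply (rule exI[of _ x], rule exI[of _ y], rule exI[of _ z])
    using rep zc xc yc v ind' by (intro conjI) blast+
qed


lemma zero_lim:
  fixes g :: "complex \<Rightarrow> complex"
  assumes "continuous_on UNIV g" "\<And>t. t \<noteq> 0 \<Longrightarrow> g t = 0"
  shows "g 0 = 0"
proof -
  have "isCont g 0" using assms(1) continuous_on_eq_continuous_at[of UNIV g] by simp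
  then have "(g \<longlongrightarrow> g 0) (at 0)" by (simp add: isCont_def)
  moreover have "(g \<longlongrightarrow> 0) (at 0)"
    by (rule tendsto_eventually) (simp add: eventually_at_filter assms(2))
  ultimately show ?thesis using tendsto_unique[of "at (0::complex)"] by force
qed

lemma Nfacts:
  assumes abc: "l = {a,b,c}" "a\<noteq>b" "a\<noteq>c" "b\<noteq>c" and lsub: "l \<subseteq> {1..d}" and j0: "j0 \<in> {1..d} - l"
  shows "{a,b,j0} \<in> N_indep d l" "l \<notin> N_indep d l" "{b,c} \<in> N_indep d l" "{a,c} \<in> N_indep d l"
    "\<And>j. j \<in> {1..d} \<Longrightarrow> {j} \<in> N_indep d l"
    "\<And>j. j \<in> {1..d} - l \<Longrightarrow> j \<noteq> j0 \<Longrightarrow> {j,j0} \<notin> N_indep d l"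
  using assms by (auto simp: N_indep_def card_insert_if)


lemma core:
  fixes \<gamma> \<rho> :: "nat \<Rightarrow> complex^3"
  assumes abc: "l = {a,b,c}" "a\<noteq>b" "a\<noteq>c" "b\<noteq>c" and lsub: "l \<subseteq> {1..d}" and j0: "j0 \<in> {1..d} - l"
    and lI: "l \<notin> I" and ab: "{a,b} \<in> I" "{a,c} \<in> I" "{b,c} \<in> I"
    and abj: "\<forall>j\<in>{1..d}-l. {a,b,j} \<in> I"
    and gM: "\<gamma> \<in> realizations d I" and rN: "\<rho> \<in> realizations d (N_indep d l)"
    and f: "f \<in> polyfun d" and fz: "\<forall>x\<in>realizations d I. f x = 0"
  shows "f \<rho> = 0"
proof -
  have dist: "a\<noteq>j0" "b\<noteq>j0" "c\<noteq>j0" using j0 abc by auto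
  have inS: "a \<in> {1..d}" "b \<in> {1..d}" "c \<in> {1..d}" "j0 \<in> {1..d}" using lsub abc j0 by auto
  have gdep: "\<And>S. S \<subseteq> {1..d} \<Longrightarrow> fam_dependent \<gamma> S \<longleftrightarrow> S \<notin> I"
    using gM unfolding realizations_def by blast
  have rdep: "\<And>S. S \<subseteq> {1..d} \<Longrightarrow> fam_dependent \<rho> S \<longleftrightarrow> S \<notin> N_indep d l"
    using rN unfolding realizations_def by blast
  have rts: "\<And>i. i \<notin> {1..d} \<Longrightarrow> \<rho> i = 0"
    using rN unfolding realizations_def tuple_space_def by blast
  note NF = Nfacts[OF abc lsub j0]
  have "\<not> fam_dependent \<gamma> {a,b,j0}" using gdep[of "{a,b,j0}"] abj j0 inS by auto
  moreover have "fam_dependent \<gamma> {a,b,c}" using gdep[of l] lI abc lsub by auto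
  moreover have "\<not> fam_dependent \<gamma> {b,c}" "\<not> fam_dependent \<gamma> {a,c}" using gdep ab inS by auto
  ultimately obtain x y z where rep: "\<forall>i. \<gamma> i = x i *s \<gamma> a + y i *s \<gamma> b + z i *s \<gamma> j0"
    and xyz: "x a = 1" "y a = 0" "z a = 0" "x b = 0" "y b = 1" "z b = 0" "z c = 0" "x c \<noteq> 0" "y c \<noteq> 0"
    and indu: "\<forall>p q r. p *s \<gamma> a + q *s \<gamma> b + r *s \<gamma> j0 = 0 \<longrightarrow> p=0 \<and> q=0 \<and> r=0"
    using coords[of a b c j0 \<gamma>] abc dist by blast
  have "\<not> fam_dependent \<rho> {a,b,j0}" using rdep[of "{a,b,j0}"] NF inS by auto
  moreover have "fam_dependent \<rho> {a,b,c}" using rdep[of l] NF abc lsub by auto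
  moreover have "\<not> fam_dependent \<rho> {b,c}" "\<not> fam_dependent \<rho> {a,c}" using rdep NF inS by auto
  ultimately obtain x' y' z' where rep': "\<forall>i. \<rho> i = x' i *s \<rho> a + y' i *s \<rho> b + z' i *s \<rho> j0"
    and xyz': "x' a = 1" "y' a = 0" "z' a = 0" "x' b = 0" "y' b = 1" "z' b = 0" "x' j0 = 0" "y' j0 = 0" "z' j0 = 1"
       "z' c = 0" "x' c \<noteq> 0" "y' c \<noteq> 0"
    and indw: "\<forall>p q r. p *s \<rho> a + q *s \<rho> b + r *s \<rho> j0 = 0 \<longrightarrow> p=0 \<and> q=0 \<and> r=0"
    using coords[of a b c j0 \<rho>] abc dist by blast
  have zj: "z j \<noteq> 0" if j: "j \<in> {1..d} - l" for j
  proof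
    assume "z j = 0"
    moreover have "\<gamma> j = x j *s \<gamma> a + y j *s \<gamma> b + z j *s \<gamma> j0" using rep by blast
    ultimately have "x j *s \<gamma> a + y j *s \<gamma> b + (-1) *s \<gamma> j = 0" by (simp add: vec_eq_iff)
    moreover have ja: "a \<noteq> j" "b \<noteq> j" using j abc by auto
    ultimately have "fam_dependent \<gamma> {a,b,j}" unfolding fam3[OF abc(2) ja] 
      by (intro exI[of _ "x j"] exI[of _ "y j"] exI[of _ "-1"]) auto
    then show False using gdep[of "{a,b,j}"] abj j inS by auto
  qed
  have rj: "x' j = 0 \<and> y' j = 0 \<and> z' j \<noteq> 0" if j: "j \<in> {1..d} - l" for j
  proof (cases "j = j0")
    case True then show ?thesis using xyz' by simp
  next
    case False
    have "fam_dependent \<rho> {j,j0}" using rdep[of "{j,j0}"] NF(6)[OF j False] j inS by auto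
    then obtain p q where pq: "p \<noteq> 0 \<or> q \<noteq> 0" "p *s \<rho> j + q *s \<rho> j0 = 0"
      unfolding fam2[OF False] by blast
    have hj: "\<rho> j = x' j *s \<rho> a + y' j *s \<rho> b + z' j *s \<rho> j0" using rep' by blast
    have "(p * x' j) *s \<rho> a + (p * y' j) *s \<rho> b + (p * z' j + q) *s \<rho> j0 = 0"
      using pq(2) unfolding hj by (simp add: vec_eq_iff algebra_simps)
    then have h: "p * x' j = 0" "p * y' j = 0" "p * z' j + q = 0" using indw by blast+
    then have p0: "p \<noteq> 0" using pq(1) by auto
    then have xy: "x' j = 0" "y' j = 0" using h by auto
    have "\<not> fam_dependent \<rho> {j}" using rdep[of "{j}"] NF(5)[of j] j by auto
    then have "\<rho> j \<noteq> 0" using fam1 by blast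
    then have "z' j \<noteq> 0" using hj xy by auto
    then show ?thesis using xy by simp
  qed
  define \<alpha> where "\<alpha> = x c"
  define \<beta> where "\<beta> = y c"
  define \<alpha>' where "\<alpha>' = x' c"
  define \<beta>' where "\<beta>' = y' c"
  have nz: "\<alpha> \<noteq> 0" "\<beta> \<noteq> 0" "\<alpha>' \<noteq> 0" "\<beta>' \<noteq> 0" using xyz xyz' unfolding \<alpha>_def \<beta>_def \<alpha>'_def \<beta>'_def by auto
  define w1 where "w1 = \<rho> a"
  define w2 where "w2 = \<rho> b"
  define w3 where "w3 = \<rho> j0"
  define P1 where "P1 t = (t*\<alpha>'/\<alpha>) *s w1" for t
  define P2 where "P2 t = (t*\<beta>'/\<beta>) *s w2" for t
  define \<delta> where "\<delta> t i = (if i \<in> {1..d} - l then (z' i / z i) *s (x i *s P1 t + y i *s P2 t + z i *s w3) else \<rho> i)" for t i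
  have \<delta>0: "\<delta> 0 = \<rho>"
  proof
    fix i
    show "\<delta> 0 i = \<rho> i"
    proof (cases "i \<in> {1..d} - l")
      case True
      have hi: "\<rho> i = x' i *s \<rho> a + y' i *s \<rho> b + z' i *s \<rho> j0" using rep' by blast
      show ?thesis using True zj[OF True] rj[OF True] unfolding \<delta>_def P1_def P2_def hi w3_def
        by (simp add: vec_eq_iff)
    next
      case False then show ?thesis unfolding \<delta>_def by auto
    qed
  qed
  have real: "\<delta> t \<in> realizations d I" if t: "t \<noteq> 0" for t
  proof -
    have ts: "\<delta> t \<in> tuple_space d" unfolding tuple_space_def \<delta>_def using rts by auto
    have indP: "p = 0 \<and> q = 0 \<and> r = 0" if h: "p *s P1 t + q *s P2 t + r *s w3 = 0" for p q r
    proof -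
      from h have "(p*(t*\<alpha>'/\<alpha>)) *s \<rho> a + (q*(t*\<beta>'/\<beta>)) *s \<rho> b + r *s \<rho> j0 = 0"
        unfolding P1_def P2_def w1_def w2_def w3_def by (simp add: vec_eq_iff mult.assoc)
      then have "p*(t*\<alpha>'/\<alpha>) = 0" "q*(t*\<beta>'/\<beta>) = 0" "r = 0" using indw by blast+
      then show "p = 0 \<and> q = 0 \<and> r = 0" using t nz by auto
    qed
    have indU: "p=0 \<and> q=0 \<and> r=0" if "p *s \<gamma> a + q *s \<gamma> b + r *s \<gamma> j0 = 0" for p q r
      using indu that by blast
    define k where "k i = (if i = a then \<alpha>/(t*\<alpha>') else if i = b then \<beta>/(t*\<beta>') else if i = c then 1/t else z' i / z i)" for i
    have dS: "fam_dependent (\<delta> t) S \<longleftrightarrow> S \<notin> I" if S: "S \<subseteq> {1..d}" for S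
    proof -
      have fS: "finite S" using S finite_subset by blast
      have th: "\<delta> t i = k i *s (x i *s P1 t + y i *s P2 t + z i *s w3)" if i: "i \<in> S" for i
      proof -
        consider "i = a" | "i = b" | "i = c" | "i \<in> {1..d} - l" using i S abc by blast
        then show ?thesis
        proof cases
          case 1 then show ?thesis unfolding \<delta>_def k_def P1_def w1_def using abc xyz t nz
            by (simp add: vec_eq_iff field_simps)
        next
          case 2 then show ?thesis unfolding \<delta>_def k_def P2_def w2_def using abc xyz t nz
            by (simp add: vec_eq_iff field_simps)
        next
          case 3
          have hc: "\<rho> c = x' c *s \<rho> a + y' c *s \<rho> b + z' c *s \<rho> j0" using rep' by blast
          show ?thesis unfolding \<delta>_def k_def P1_def P2_def w1_def w2_def using 3 abc xyz xyz' t nz hc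
            unfolding \<alpha>_def \<beta>_def \<alpha>'_def \<beta>'_def
            by (simp add: vec_eq_iff field_simps)
        next
          case 4
          then have "i \<noteq> a" "i \<noteq> b" "i \<noteq> c" using abc by auto
          then show ?thesis unfolding \<delta>_def k_def using 4 by simp
        qed
      qed
      have kz: "k i \<noteq> 0" if i: "i \<in> S" for i
      proof -
        consider "i = a" | "i = b" | "i = c" | "i \<in> {1..d} - l" using i S abc by blast
        then show ?thesis
        proof cases
          case 4
          then have "i \<noteq> a" "i \<noteq> b" "i \<noteq> c" using abc by auto
          then show ?thesis unfolding k_def using zj[OF 4] rj[OF 4] by simp
        qed (use abc t nz in \<open>auto simp: k_def\<close>)
      qed
      have hg: "\<gamma> i = 1 *s (x i *s \<gamma> a + y i *s \<gamma> b + z i *s \<gamma> j0)" for i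
        using rep vector_smult_lid by metis
      have "fam_dependent (\<delta> t) S \<longleftrightarrow> (\<exists>c. (\<Sum>s\<in>S. c s * x s) = 0 \<and> (\<Sum>s\<in>S. c s * y s) = 0
            \<and> (\<Sum>s\<in>S. c s * z s) = 0 \<and> (\<exists>s\<in>S. c s \<noteq> 0))"
        by (rule dep_repr[OF indP fS th kz])
      moreover have "fam_dependent \<gamma> S \<longleftrightarrow> (\<exists>c. (\<Sum>s\<in>S. c s * x s) = 0 \<and> (\<Sum>s\<in>S. c s * y s) = 0
            \<and> (\<Sum>s\<in>S. c s * z s) = 0 \<and> (\<exists>s\<in>S. c s \<noteq> 0))"
        using dep_repr[where m = "\<lambda>_. 1::complex", OF indU fS hg] by simp
      ultimately show ?thesis using gdep[OF S] by simp
    qed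
    show ?thesis unfolding realizations_def using ts dS by blast
  qed
  have cont: "continuous_on UNIV (\<lambda>t. g (\<delta> t))" if "g \<in> polyfun d" for g
    using that
  proof induction
    case (pf_const c) then show ?case by simp
  next
    case (pf_coord i j)
    show ?case
    proof (cases "i \<in> {1..d} - l")
      case True
      then have e: "(\<lambda>t. \<delta> t i $ j) = (\<lambda>t. (z' i / z i) * (x i * ((t*\<alpha>'/\<alpha>) * w1 $ j) + y i * ((t*\<beta>'/\<beta>) * w2 $ j) + z i * w3 $ j))"
        unfolding \<delta>_def P1_def P2_def by (simp add: fun_eq_iff field_simps)
      show ?thesis unfolding e by (auto intro!: continuous_intros simp: nz zj[OF True])
    next
      case False
      then have e: "(\<lambda>t. \<delta> t i $ j) = (\<lambda>t. \<rho> i $ j)" unfolding \<delta>_def by auto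
      show ?thesis unfolding e by simp
    qed
  next
    case (pf_add f g) then show ?case by (simp add: continuous_intros)
  next
    case (pf_mult f g) then show ?case by (simp add: continuous_intros)
  qed
  have "f (\<delta> 0) = 0"
    by (rule zero_lim[of "\<lambda>t. f (\<delta> t)", OF cont[OF f]]) (use fz real in blast)
  then show ?thesis using \<delta>0 by simp
qed


theorem mainTheorem9:
  fixes d :: nat and I :: "nat set set" and l :: "nat set"
  assumes "point_line_config d I"
    and "mrank I {1..d} = 3"
    and "realizable d I"
    and "is_line d I l"
    and "card l = 3"
  shows "realization_space d (N_indep d l) \<subseteq> realization_space d I"
  proof
  fix g assume g: "g \<in> realization_space d (N_indep d l)"
  obtain a b c j0 where C: "l = {a,b,c}" "a\<noteq>b" "a\<noteq>c" "b\<noteq>c" "l \<subseteq> {1..d}" "j0 \<in> {1..d} - l"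
    "l \<notin> I" "{a,b} \<in> I" "{a,c} \<in> I" "{b,c} \<in> I" "\<forall>j\<in>{1..d}-l. {a,b,j} \<in> I"
    using comb[OF assms(1,2,4,5)] by blast
  obtain \<gamma> where \<gamma>: "\<gamma> \<in> realizations d I" using assms(3) unfolding realizable_def by blast
  have gt: "g \<in> tuple_space d" and gz: "\<And>f. f \<in> polyfun d \<Longrightarrow> (\<forall>x\<in>realizations d (N_indep d l). f x = 0) \<Longrightarrow> f g = 0"
    using g unfolding realization_space_def zariski_closure_def by blast+
  have "\<forall>f\<in>polyfun d. (\<forall>x\<in>realizations d I. f x = 0) \<longrightarrow> f g = 0"
  proof (intro ballI impI)
    fix f assume f: "f \<in> polyfun d" and fz: "\<forall>x\<in>realizations d I. f x = 0"
    have "\<forall>x\<in>realizations d (N_indep d l). f x = 0"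
      using core[OF C(1-4) C(5) C(6) C(7) C(8-10) C(11) \<gamma> _ f fz] by blast
    then show "f g = 0" using gz f by blast
  qed
  then show "g \<in> realization_space d I"
    unfolding realization_space_def zariski_closure_def using gt by blast
qed

end
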